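(* Let $u\in L^\infty([0,+\infty);W^{1,p}(\mathbb{T}^d;\mathbb{R}^d))$, $p\in(1,\infty)$, be divergence-free. The set $\mathcal{F}_u$ of initial data mixed by $u$ is open and dense in $L^\infty(\mathbb{T}^d)$ if and only if $\mathcal{N}_u\neq\mathcal{M}$.
   Context: $\mathbb{T}^d$ ($d\ge2$) is the torus with Lebesgue measure; $\mathcal{M}$ is the $\sigma$-algebra of Lebesgue measurable sets. $\Phi_t$ denotes the DiPerna–Lions measure-preserving flow map of $u$ (for a.e. $x$, $t\mapsto\Phi_t(x)$ solves $\dot\gamma=u(t,\gamma)$, $\gamma(0)=x$). $\mathcal{F}_u:=\{\rho\in L^\infty(\mathbb{T}^d)\mid\{\rho\circ\Phi_t^{-1}\}_{t\ge0}\text{ is not precompact in }L^2(\mathbb{T}^d)\}$ and $\mathcal{N}_u:=\{D\in\mathcal{M}\mid \{\mathbbm{1}_D\circ\Phi_t^{-1}\}_{t\ge0}\text{ is precompact in }L^2(\mathbb{T}^d)\}$. $L^\infty(\mathbb{T}^d)$ carries its norm topology. *)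

theory Defs
  imports "HOL-Analysis.Analysis" "HOL-Probability.Essential_Supremum"
begin

(* The torus T^d is modelled by the fundamental cube [0,1)^d with Lebesgue measure;
   points of R^d are projected to the torus by taking fractional parts componentwise. *)

definition cube :: "(real^'d::finite) set" where
  "cube = {x. \<forall>i. 0 \<le> x$i \<and> x$i < 1}"

definition torus :: "(real^'d::finite) measure" where
  "torus = lebesgue_on cube"

definition int_vec :: "real^'d::finite \<Rightarrow> bool" where
  "int_vec k \<longleftrightarrow> (\<forall>i. k$i \<in> \<int>)"

definition periodic :: "(real^'d::finite \<Rightarrow> 'b) \<Rightarrow> bool" where
  "periodic f \<longleftrightarrow> (\<forall>x k. int_vec k \<longrightarrow> f (x + k) = f x)"

definition tproj :: "real^'d::finite \<Rightarrow> real^'d" where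
  "tproj x = (\<chi> i. frac (x$i))"

definition pd :: "(real^'d::finite \<Rightarrow> real) \<Rightarrow> 'd \<Rightarrow> real^'d \<Rightarrow> real" where
  "pd \<phi> j x = frechet_derivative \<phi> (at x) (axis j 1)"

definition test_fun :: "(real^'d::finite \<Rightarrow> real) \<Rightarrow> bool" where
  "test_fun \<phi> \<longleftrightarrow> periodic \<phi> \<and> (\<forall>x. \<phi> differentiable (at x)) \<and>
     (\<forall>j. continuous_on UNIV (pd \<phi> j))"

definition in_Lp :: "real \<Rightarrow> (real^'d::finite \<Rightarrow> real) \<Rightarrow> bool" where
  "in_Lp p f \<longleftrightarrow> f \<in> borel_measurable torus \<and> integrable torus (\<lambda>x. \<bar>f x\<bar> powr p)"

definition Lp_norm :: "real \<Rightarrow> (real^'d::finite \<Rightarrow> real) \<Rightarrow> real" where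
  "Lp_norm p f = (\<integral>x. \<bar>f x\<bar> powr p \<partial>torus) powr (1 / p)"

definition weak_partial :: "(real^'d::finite \<Rightarrow> real) \<Rightarrow> 'd \<Rightarrow> (real^'d \<Rightarrow> real) \<Rightarrow> bool" where
  "weak_partial f j g \<longleftrightarrow> integrable torus f \<and> integrable torus g \<and>
     (\<forall>\<phi>. test_fun \<phi> \<longrightarrow>
        (\<integral>x. f x * pd \<phi> j x \<partial>torus) = - (\<integral>x. g x * \<phi> x \<partial>torus))"

definition W1p_bounded :: "real \<Rightarrow> real \<Rightarrow> (real^'d::finite \<Rightarrow> real^'d) \<Rightarrow> bool" where
  "W1p_bounded p M v \<longleftrightarrow> periodic v \<and>
     (\<exists>G :: 'd \<Rightarrow> 'd \<Rightarrow> real^'d \<Rightarrow> real.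
        (\<forall>i. in_Lp p (\<lambda>x. v x $ i)) \<and>
        (\<forall>i j. in_Lp p (G i j) \<and> weak_partial (\<lambda>x. v x $ i) j (G i j)) \<and>
        (\<Sum>i\<in>UNIV. Lp_norm p (\<lambda>x. v x $ i) + (\<Sum>j\<in>UNIV. Lp_norm p (G i j))) \<le> M)"

definition Linf_W1p :: "real \<Rightarrow> (real \<Rightarrow> real^'d::finite \<Rightarrow> real^'d) \<Rightarrow> bool" where
  "Linf_W1p p u \<longleftrightarrow> (\<lambda>(t, x). u t x) \<in> borel_measurable (lborel \<Otimes>\<^sub>M lborel) \<and>
     (\<exists>M. AE t in lebesgue_on {0..}. W1p_bounded p M (u t))"

definition div_free :: "(real \<Rightarrow> real^'d::finite \<Rightarrow> real^'d) \<Rightarrow> bool" where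
  "div_free u \<longleftrightarrow> (AE t in lebesgue_on {0..}. \<forall>\<phi>. test_fun \<phi> \<longrightarrow>
      (\<integral>x. (\<Sum>i\<in>UNIV. u t x $ i * pd \<phi> i x) \<partial>torus) = 0)"

(* X is a (lifted) regular Lagrangian flow of u: for a.e. x, t \<mapsto> X t x solves
   \<gamma>' = u(t,\<gamma>), \<gamma>(0)=x in the Caratheodory (integral) sense; its torus projection
   \<Phi>_t = tproj \<circ> X t is measure preserving and \<Psi> t is its a.e. inverse. *)
definition flow_map :: "(real \<Rightarrow> real^'d::finite \<Rightarrow> real^'d) \<Rightarrow> real \<Rightarrow> real^'d \<Rightarrow> real^'d" where
  "flow_map X t x = tproj (X t x)"

definition meas_pres :: "(real^'d::finite \<Rightarrow> real^'d) \<Rightarrow> bool" where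
  "meas_pres T \<longleftrightarrow> T \<in> measurable torus torus \<and> distr torus torus T = torus"

definition DL_flow :: "(real \<Rightarrow> real^'d::finite \<Rightarrow> real^'d) \<Rightarrow> (real \<Rightarrow> real^'d \<Rightarrow> real^'d)
     \<Rightarrow> (real \<Rightarrow> real^'d \<Rightarrow> real^'d) \<Rightarrow> bool" where
  "DL_flow u X \<Psi> \<longleftrightarrow>
     (AE x in torus. X 0 x = x \<and> (\<forall>t\<ge>0. (\<lambda>s. u s (X s x)) absolutely_integrable_on {0..t} \<and>
          X t x = x + integral {0..t} (\<lambda>s. u s (X s x)))) \<and>
     (\<forall>t\<ge>0. meas_pres (flow_map X t) \<and> meas_pres (\<Psi> t) \<and>
          (AE x in torus. \<Psi> t (flow_map X t x) = x) \<and>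
          (AE x in torus. flow_map X t (\<Psi> t x) = x))"

definition in_Linf :: "(real^'d::finite \<Rightarrow> real) \<Rightarrow> bool" where
  "in_Linf f \<longleftrightarrow> f \<in> borel_measurable torus \<and> esssup torus (\<lambda>x. ereal \<bar>f x\<bar>) < \<infinity>"

definition Linf_dist :: "(real^'d::finite \<Rightarrow> real) \<Rightarrow> (real^'d \<Rightarrow> real) \<Rightarrow> ereal" where
  "Linf_dist f g = esssup torus (\<lambda>x. ereal \<bar>f x - g x\<bar>)"

definition L2_conv :: "(nat \<Rightarrow> real^'d::finite \<Rightarrow> real) \<Rightarrow> (real^'d \<Rightarrow> real) \<Rightarrow> bool" where
  "L2_conv f g \<longleftrightarrow> g \<in> borel_measurable torus \<and> integrable torus (\<lambda>x. (g x)\<^sup>2) \<and>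
     (\<lambda>n. \<integral>\<^sup>+x. ennreal ((f n x - g x)\<^sup>2) \<partial>torus) \<longlonglongrightarrow> 0"

definition L2_precompact :: "(real^'d::finite \<Rightarrow> real) set \<Rightarrow> bool" where
  "L2_precompact S \<longleftrightarrow>
     (\<forall>f :: nat \<Rightarrow> real^'d \<Rightarrow> real. (\<forall>n. f n \<in> S) \<longrightarrow>
        (\<exists>(r :: nat \<Rightarrow> nat) g. strict_mono r \<and> L2_conv (f \<circ> r) g))"

definition orbit :: "(real \<Rightarrow> real^'d::finite \<Rightarrow> real^'d) \<Rightarrow> (real^'d \<Rightarrow> real) \<Rightarrow> (real^'d \<Rightarrow> real) set" where
  "orbit \<Psi> \<rho> = {(\<lambda>x. \<rho> (\<Psi> t x)) | t. t \<ge> 0}"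

definition mixed_set :: "(real \<Rightarrow> real^'d::finite \<Rightarrow> real^'d) \<Rightarrow> (real^'d \<Rightarrow> real) set" where
  "mixed_set \<Psi> = {\<rho>. in_Linf \<rho> \<and> \<not> L2_precompact (orbit \<Psi> \<rho>)}"

definition nonmixed_sets :: "(real \<Rightarrow> real^'d::finite \<Rightarrow> real^'d) \<Rightarrow> (real^'d) set set" where
  "nonmixed_sets \<Psi> = {D \<in> sets torus. L2_precompact (orbit \<Psi> (indicator D))}"

definition Linf_open :: "(real^'d::finite \<Rightarrow> real) set \<Rightarrow> bool" where
  "Linf_open F \<longleftrightarrow> F \<subseteq> {f. in_Linf f} \<and>
     (\<forall>\<rho>\<in>F. \<exists>\<epsilon>>0. \<forall>\<sigma>. in_Linf \<sigma> \<and> Linf_dist \<sigma> \<rho> < ereal \<epsilon> \<longrightarrow> \<sigma> \<in> F)"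

definition Linf_dense :: "(real^'d::finite \<Rightarrow> real) set \<Rightarrow> bool" where
  "Linf_dense F \<longleftrightarrow> F \<subseteq> {f. in_Linf f} \<and>
     (\<forall>\<rho>. in_Linf \<rho> \<longrightarrow> (\<forall>\<epsilon>>0. \<exists>\<sigma>\<in>F. Linf_dist \<sigma> \<rho> < ereal \<epsilon>))"

end

theory Submission
  imports Defs "HOL-Library.Diagonal_Subsequence"
begin


lemma cube_sets: "cube \<in> sets (lebesgue :: (real^'d::finite) measure)"
proof -
  have "cube \<in> sets (borel :: (real^'d::finite) measure)"
    unfolding cube_def by measurable
  then show ?thesis by (simp add: sets_lborel[symmetric] del: sets_lborel)
qed

lemma cube_bounded: "bounded (cube :: (real^'d::finite) set)"
proof -
  have "cube \<subseteq> cbox (0::real^'d) 1"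
    by (auto simp: cube_def mem_box_cart less_imp_le)
  then show ?thesis using bounded_cbox bounded_subset by blast
qed

lemma torus_finite: "finite_measure (torus :: (real^'d::finite) measure)"
proof
  have "emeasure (lebesgue_on (cube :: (real^'d) set)) cube = emeasure lebesgue (cube :: (real^'d) set)"
    using cube_sets by (intro emeasure_restrict_space) auto
  then have "emeasure (torus :: (real^'d::finite) measure) (space torus) = emeasure lebesgue (cube :: (real^'d) set)"
    unfolding torus_def space_restrict_space by simp
  also have "\<dots> < \<infinity>"
    using bounded_set_imp_lmeasurable[OF cube_bounded cube_sets] fmeasurableD2 by (simp add: top.not_eq_extremum)
  finally show "emeasure (torus :: (real^'d::finite) measure) (space torus) \<noteq> \<infinity>" by simp
qed

lemma nn_sum0:
  fixes u v :: "nat \<Rightarrow> 'a \<Rightarrow> real"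
  assumes um: "\<And>n. u n \<in> borel_measurable M" and vm: "\<And>n. v n \<in> borel_measurable M"
    and u0: "\<And>n x. 0 \<le> u n x" and v0: "\<And>n x. 0 \<le> v n x"
    and ul: "(\<lambda>n. \<integral>\<^sup>+x. ennreal (u n x) \<partial>M) \<longlonglongrightarrow> 0"
    and vl: "(\<lambda>n. \<integral>\<^sup>+x. ennreal (v n x) \<partial>M) \<longlonglongrightarrow> 0"
    and c: "0 \<le> c" and d: "0 \<le> d"
  shows "(\<lambda>n. \<integral>\<^sup>+x. ennreal (c * u n x + d * v n x) \<partial>M) \<longlonglongrightarrow> 0"
proof -
  have eq: "(\<integral>\<^sup>+x. ennreal (c * u n x + d * v n x) \<partial>M) =
     ennreal c * (\<integral>\<^sup>+x. ennreal (u n x) \<partial>M) + ennreal d * (\<integral>\<^sup>+x. ennreal (v n x) \<partial>M)" for n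
  proof -
    have "(\<integral>\<^sup>+x. ennreal (c * u n x + d * v n x) \<partial>M) =
       (\<integral>\<^sup>+x. ennreal c * ennreal (u n x) + ennreal d * ennreal (v n x) \<partial>M)"
      using u0 v0 c d by (intro nn_integral_cong) (simp add: ennreal_plus ennreal_mult)
    also have "\<dots> = (\<integral>\<^sup>+x. ennreal c * ennreal (u n x) \<partial>M) + (\<integral>\<^sup>+x. ennreal d * ennreal (v n x) \<partial>M)"
      using um vm by (intro nn_integral_add) auto
    also have "\<dots> = ennreal c * (\<integral>\<^sup>+x. ennreal (u n x) \<partial>M) + ennreal d * (\<integral>\<^sup>+x. ennreal (v n x) \<partial>M)"
      using um vm by (simp add: nn_integral_cmult)
    finally show ?thesis .
  qed
  have "(\<lambda>n. ennreal c * (\<integral>\<^sup>+x. ennreal (u n x) \<partial>M) + ennreal d * (\<integral>\<^sup>+x. ennreal (v n x) \<partial>M))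
      \<longlonglongrightarrow> ennreal c * 0 + ennreal d * 0"
    by (intro tendsto_add ennreal_tendsto_cmult ul vl) auto
  then show ?thesis unfolding eq by simp
qed

lemma sq_sum2: "((x::real) + y)\<^sup>2 \<le> 2 * x\<^sup>2 + 2 * y\<^sup>2"
proof -
  have "2 * x\<^sup>2 + 2 * y\<^sup>2 - (x + y)\<^sup>2 = (x - y)\<^sup>2" by (simp add: power2_eq_square algebra_simps)
  moreover have "0 \<le> (x - y)\<^sup>2" by simp
  ultimately show ?thesis by linarith
qed

lemma L2_sub: "L2_conv f g \<Longrightarrow> strict_mono r \<Longrightarrow> L2_conv (f \<circ> r) g"
  unfolding L2_conv_def using LIMSEQ_subseq_LIMSEQ[of _ 0 r] by (auto simp: o_def)

lemma L2_lin:
  fixes f h :: "nat \<Rightarrow> real^'d::finite \<Rightarrow> real"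
  assumes fm: "\<And>n. f n \<in> borel_measurable torus" and hm: "\<And>n. h n \<in> borel_measurable torus"
    and f: "L2_conv f g1" and h: "L2_conv h g2"
  shows "L2_conv (\<lambda>n x. a * f n x + b * h n x) (\<lambda>x. a * g1 x + b * g2 x)"
  unfolding L2_conv_def
proof (intro conjI)
  have g1: "g1 \<in> borel_measurable torus" "integrable torus (\<lambda>x. (g1 x)\<^sup>2)"
    and g2: "g2 \<in> borel_measurable torus" "integrable torus (\<lambda>x. (g2 x)\<^sup>2)"
    and l1: "(\<lambda>n. \<integral>\<^sup>+x. ennreal ((f n x - g1 x)\<^sup>2) \<partial>torus) \<longlonglongrightarrow> 0"
    and l2: "(\<lambda>n. \<integral>\<^sup>+x. ennreal ((h n x - g2 x)\<^sup>2) \<partial>torus) \<longlonglongrightarrow> 0"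
    using f h unfolding L2_conv_def by auto
  show "(\<lambda>x. a * g1 x + b * g2 x) \<in> borel_measurable torus" using g1 g2 by measurable
  show "integrable torus (\<lambda>x. (a * g1 x + b * g2 x)\<^sup>2)"
  proof (rule Bochner_Integration.integrable_bound)
    show "integrable torus (\<lambda>x. 2 * a\<^sup>2 * (g1 x)\<^sup>2 + 2 * b\<^sup>2 * (g2 x)\<^sup>2)"
      using g1 g2 by auto
    show "(\<lambda>x. (a * g1 x + b * g2 x)\<^sup>2) \<in> borel_measurable torus" using g1 g2 by measurable
    show "AE x in torus. norm ((a * g1 x + b * g2 x)\<^sup>2) \<le> norm (2 * a\<^sup>2 * (g1 x)\<^sup>2 + 2 * b\<^sup>2 * (g2 x)\<^sup>2)"
    proof (intro AE_I2)
      fix x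
      have "(a * g1 x + b * g2 x)\<^sup>2 \<le> 2 * (a * g1 x)\<^sup>2 + 2 * (b * g2 x)\<^sup>2" by (rule sq_sum2)
      moreover have "0 \<le> 2 * a\<^sup>2 * (g1 x)\<^sup>2 + 2 * b\<^sup>2 * (g2 x)\<^sup>2" by simp
      ultimately show "norm ((a * g1 x + b * g2 x)\<^sup>2) \<le> norm (2 * a\<^sup>2 * (g1 x)\<^sup>2 + 2 * b\<^sup>2 * (g2 x)\<^sup>2)"
        by (simp add: power_mult_distrib)
    qed
  qed
  have lim: "(\<lambda>n. \<integral>\<^sup>+x. ennreal ((2 * a\<^sup>2) * (f n x - g1 x)\<^sup>2 + (2 * b\<^sup>2) * (h n x - g2 x)\<^sup>2) \<partial>torus) \<longlonglongrightarrow> 0"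
    by (rule nn_sum0[OF _ _ _ _ l1 l2]) (use fm hm g1 g2 in auto)
  show "(\<lambda>n. \<integral>\<^sup>+x. ennreal ((a * f n x + b * h n x - (a * g1 x + b * g2 x))\<^sup>2) \<partial>torus) \<longlonglongrightarrow> 0"
  proof (rule tendsto_sandwich[OF _ _ tendsto_const lim])
    show "\<forall>\<^sub>F n in sequentially. 0 \<le> (\<integral>\<^sup>+x. ennreal ((a * f n x + b * h n x - (a * g1 x + b * g2 x))\<^sup>2) \<partial>torus)"
      by simp
    show "\<forall>\<^sub>F n in sequentially. (\<integral>\<^sup>+x. ennreal ((a * f n x + b * h n x - (a * g1 x + b * g2 x))\<^sup>2) \<partial>torus)
       \<le> (\<integral>\<^sup>+x. ennreal ((2 * a\<^sup>2) * (f n x - g1 x)\<^sup>2 + (2 * b\<^sup>2) * (h n x - g2 x)\<^sup>2) \<partial>torus)"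
    proof (intro always_eventually allI nn_integral_mono ennreal_leI)
      fix n x
      have "(a * f n x + b * h n x - (a * g1 x + b * g2 x))\<^sup>2 = (a * (f n x - g1 x) + b * (h n x - g2 x))\<^sup>2"
        by (simp add: algebra_simps)
      also have "\<dots> \<le> 2 * (a * (f n x - g1 x))\<^sup>2 + 2 * (b * (h n x - g2 x))\<^sup>2" by (rule sq_sum2)
      finally show "(a * f n x + b * h n x - (a * g1 x + b * g2 x))\<^sup>2 \<le> (2 * a\<^sup>2) * (f n x - g1 x)\<^sup>2 + (2 * b\<^sup>2) * (h n x - g2 x)\<^sup>2"
        by (simp add: power_mult_distrib)
    qed
  qed
qed

lemma bound_real: "\<bar>(p::real) - q\<bar> \<le> c \<Longrightarrow> (max 0 (\<bar>P - Q\<bar> - c))\<^sup>2 \<le> 2 * (p - P)\<^sup>2 + 2 * (q - Q)\<^sup>2"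
proof -
  assume a: "\<bar>p - q\<bar> \<le> c"
  have "max 0 (\<bar>P - Q\<bar> - c) \<le> \<bar>p - P\<bar> + \<bar>q - Q\<bar>" using a by (auto simp: max_def split: abs_split)
  then have "(max 0 (\<bar>P - Q\<bar> - c))\<^sup>2 \<le> (\<bar>p - P\<bar> + \<bar>q - Q\<bar>)\<^sup>2"
    by (intro power_mono) auto
  also have "\<dots> \<le> 2 * \<bar>p - P\<bar>\<^sup>2 + 2 * \<bar>q - Q\<bar>\<^sup>2" by (rule sq_sum2)
  finally show ?thesis by simp
qed

lemma L2_bound:
  fixes a b :: "nat \<Rightarrow> real^'d::finite \<Rightarrow> real"
  assumes am: "\<And>n. a n \<in> borel_measurable torus" and bm: "\<And>n. b n \<in> borel_measurable torus"
    and a: "L2_conv a A" and b: "L2_conv b B"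
    and ab: "\<And>n. AE x in torus. \<bar>a n x - b n x\<bar> \<le> c"
  shows "AE x in torus. \<bar>A x - B x\<bar> \<le> c"
proof -
  have Am: "A \<in> borel_measurable torus" and Bm: "B \<in> borel_measurable torus"
    and l1: "(\<lambda>n. \<integral>\<^sup>+x. ennreal ((a n x - A x)\<^sup>2) \<partial>torus) \<longlonglongrightarrow> 0"
    and l2: "(\<lambda>n. \<integral>\<^sup>+x. ennreal ((b n x - B x)\<^sup>2) \<partial>torus) \<longlonglongrightarrow> 0"
    using a b unfolding L2_conv_def by auto
  have lim: "(\<lambda>n. \<integral>\<^sup>+x. ennreal (2 * (a n x - A x)\<^sup>2 + 2 * (b n x - B x)\<^sup>2) \<partial>torus) \<longlonglongrightarrow> 0"
    by (rule nn_sum0[OF _ _ _ _ l1 l2]) (use am bm Am Bm in auto)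
  have le: "(\<integral>\<^sup>+x. ennreal ((max 0 (\<bar>A x - B x\<bar> - c))\<^sup>2) \<partial>torus)
       \<le> (\<integral>\<^sup>+x. ennreal (2 * (a n x - A x)\<^sup>2 + 2 * (b n x - B x)\<^sup>2) \<partial>torus)" for n
    apply (rule nn_integral_mono_AE)
    apply (rule eventually_mono[OF ab[of n]])
    apply (rule ennreal_leI)
    apply (erule bound_real)
    done
  have "(\<integral>\<^sup>+x. ennreal ((max 0 (\<bar>A x - B x\<bar> - c))\<^sup>2) \<partial>torus) \<le> 0"
    using LIMSEQ_le_const[OF lim] le by blast
  then have "(\<integral>\<^sup>+x. ennreal ((max 0 (\<bar>A x - B x\<bar> - c))\<^sup>2) \<partial>torus) = 0" by simp
  then have "AE x in torus. ennreal ((max 0 (\<bar>A x - B x\<bar> - c))\<^sup>2) = 0"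
    by (subst (asm) nn_integral_0_iff_AE) (use Am Bm in measurable)
  then show ?thesis
    by (rule eventually_mono) (simp add: max_def split: if_splits)
qed

lemma eps_lemma:
  fixes X :: "nat \<Rightarrow> ennreal"
  assumes "\<And>e. e > 0 \<Longrightarrow> eventually (\<lambda>n. X n \<le> ennreal e) sequentially"
  shows "X \<longlonglongrightarrow> 0"
proof (rule order_tendstoI)
  fix a :: ennreal assume "a < 0" then show "eventually (\<lambda>n. a < X n) sequentially" by simp
next
  fix a :: ennreal assume "0 < a"
  then obtain b where b: "0 < b" "b < a" using dense by blast
  then have "b < top" using top.not_eq_extremum by fastforce
  then obtain e where e: "b = ennreal e" "0 \<le> e" using ennreal_cases by (metis less_irrefl)
  with b have "e > 0" by simp
  from assms[OF this] show "eventually (\<lambda>n. X n < a) sequentially"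
    by (rule eventually_mono) (use b e in auto)
qed

lemma in_Linf_iff: "in_Linf f \<longleftrightarrow> f \<in> borel_measurable torus \<and> (\<exists>M. AE x in torus. \<bar>f x\<bar> \<le> M)"
proof
  assume a: "in_Linf f"
  then have fm: "f \<in> borel_measurable torus" and lt: "esssup torus (\<lambda>x. ereal \<bar>f x\<bar>) < \<infinity>"
    by (auto simp: in_Linf_def)
  have ae: "AE x in torus. ereal \<bar>f x\<bar> \<le> esssup torus (\<lambda>x. ereal \<bar>f x\<bar>)" by (rule esssup_AE)
  show "f \<in> borel_measurable torus \<and> (\<exists>M. AE x in torus. \<bar>f x\<bar> \<le> M)"
  proof (cases "esssup torus (\<lambda>x. ereal \<bar>f x\<bar>)")
    case (real r)
    then show ?thesis using fm ae by auto
  next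
    case PInf then show ?thesis using lt by simp
  next
    case MInf then show ?thesis using fm ae by (auto elim!: eventually_mono)
  qed
next
  assume "f \<in> borel_measurable torus \<and> (\<exists>M. AE x in torus. \<bar>f x\<bar> \<le> M)"
  then obtain M where fm: "f \<in> borel_measurable torus" and M: "AE x in torus. \<bar>f x\<bar> \<le> M" by auto
  have "esssup torus (\<lambda>x. ereal \<bar>f x\<bar>) \<le> ereal M"
    using M fm by (intro esssup_I) (auto elim!: eventually_mono)
  then have "esssup torus (\<lambda>x. ereal \<bar>f x\<bar>) < \<infinity>" by (rule le_less_trans) simp
  then show "in_Linf f" using fm unfolding in_Linf_def by simp
qed

lemma Linf_dist_lt: "Linf_dist f g < ereal e \<Longrightarrow> AE x in torus. \<bar>f x - g x\<bar> \<le> e"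
  unfolding Linf_dist_def
proof (rule eventually_mono[OF esssup_AE[where M=torus and f="\<lambda>x. ereal \<bar>f x - g x\<bar>"]])
  fix x assume "ereal \<bar>f x - g x\<bar> \<le> esssup torus (\<lambda>x. ereal \<bar>f x - g x\<bar>)"
    and "esssup torus (\<lambda>x. ereal \<bar>f x - g x\<bar>) < ereal e"
  then have "ereal \<bar>f x - g x\<bar> < ereal e" by (rule le_less_trans)
  then show "\<bar>f x - g x\<bar> \<le> e" by simp
qed

lemma Linf_dist_le:
  assumes "f \<in> borel_measurable torus" "g \<in> borel_measurable torus" "AE x in torus. \<bar>f x - g x\<bar> \<le> e"
  shows "Linf_dist f g \<le> ereal e"
  unfolding Linf_dist_def using assms by (intro esssup_I) (auto elim!: eventually_mono)



locale mpf =
  fixes \<Psi> :: "real \<Rightarrow> real^'d::finite \<Rightarrow> real^'d"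
  assumes mpres: "\<And>t. 0 \<le> t \<Longrightarrow> meas_pres (\<Psi> t)"
begin

lemma Psi_meas: "0 \<le> t \<Longrightarrow> \<Psi> t \<in> measurable torus torus"
  using mpres unfolding meas_pres_def by blast

lemma AE_Psi:
  fixes P :: "real^'d \<Rightarrow> bool"
  assumes "0 \<le> t" "AE y in torus. P y"
  shows "AE x in torus. P (\<Psi> t x)"
proof -
  have d: "distr torus torus (\<Psi> t) = torus" using mpres[OF assms(1)] unfolding meas_pres_def by blast
  have "AE y in distr torus torus (\<Psi> t). P y"
    by (subst d) (rule assms(2))
  then show ?thesis by (rule AE_distrD[OF Psi_meas[OF assms(1)]])
qed

lemma comp_meas: "0 \<le> t \<Longrightarrow> \<rho> \<in> borel_measurable torus \<Longrightarrow> (\<lambda>x. \<rho> (\<Psi> t x)) \<in> borel_measurable torus"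
  using measurable_compose[OF Psi_meas] by blast

lemma orbit_iff: "f \<in> orbit \<Psi> \<rho> \<longleftrightarrow> (\<exists>t\<ge>0. f = (\<lambda>x. \<rho> (\<Psi> t x)))"
  unfolding orbit_def by blast

lemma orbit_seq:
  assumes "\<forall>n. f n \<in> orbit \<Psi> \<rho>"
  obtains t where "\<And>n. 0 \<le> t n" "\<And>n. f n = (\<lambda>x. \<rho> (\<Psi> (t n) x))"
proof -
  have "\<forall>n. \<exists>t. 0 \<le> t \<and> f n = (\<lambda>x. \<rho> (\<Psi> t x))" using assms orbit_iff by blast
  then obtain t where "\<forall>n. 0 \<le> t n \<and> f n = (\<lambda>x. \<rho> (\<Psi> (t n) x))" by metis
  then show ?thesis using that by blast
qed

lemma Pc_lin:
  assumes rm: "\<rho> \<in> borel_measurable torus" and sm: "\<sigma> \<in> borel_measurable torus"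
    and r: "L2_precompact (orbit \<Psi> \<rho>)" and s: "L2_precompact (orbit \<Psi> \<sigma>)"
  shows "L2_precompact (orbit \<Psi> (\<lambda>x. a * \<rho> x + b * \<sigma> x))"
  unfolding L2_precompact_def
proof (intro allI impI)
  fix f :: "nat \<Rightarrow> real^'d \<Rightarrow> real"
  assume "\<forall>n. f n \<in> orbit \<Psi> (\<lambda>x. a * \<rho> x + b * \<sigma> x)"
  then obtain t where t0: "\<And>n. 0 \<le> t n" and ft: "\<And>n. f n = (\<lambda>x. a * \<rho> (\<Psi> (t n) x) + b * \<sigma> (\<Psi> (t n) x))"
    by (rule orbit_seq) blast
  have o1: "\<forall>n. (\<lambda>x. \<rho> (\<Psi> (t n) x)) \<in> orbit \<Psi> \<rho>" using t0 orbit_iff by blast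
  obtain r1 g1 where r1: "strict_mono r1" and g1: "L2_conv ((\<lambda>n x. \<rho> (\<Psi> (t n) x)) \<circ> r1) g1"
    using r[unfolded L2_precompact_def, THEN spec, THEN mp, OF o1] by blast
  have o2: "\<forall>n. (\<lambda>x. \<sigma> (\<Psi> (t (r1 n)) x)) \<in> orbit \<Psi> \<sigma>" using t0 orbit_iff by blast
  obtain r2 g2 where r2: "strict_mono r2" and g2: "L2_conv ((\<lambda>n x. \<sigma> (\<Psi> (t (r1 n)) x)) \<circ> r2) g2"
    using s[unfolded L2_precompact_def, THEN spec, THEN mp, OF o2] by blast
  have g1': "L2_conv (\<lambda>n x. \<rho> (\<Psi> (t (r1 (r2 n))) x)) g1"
    using L2_sub[OF g1 r2] by (simp add: o_def)
  have g2': "L2_conv (\<lambda>n x. \<sigma> (\<Psi> (t (r1 (r2 n))) x)) g2"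
    using g2 by (simp add: o_def)
  have "L2_conv (\<lambda>n x. a * \<rho> (\<Psi> (t (r1 (r2 n))) x) + b * \<sigma> (\<Psi> (t (r1 (r2 n))) x)) (\<lambda>x. a * g1 x + b * g2 x)"
    by (rule L2_lin[OF _ _ g1' g2']) (use comp_meas t0 rm sm in auto)
  moreover have "f \<circ> (r1 \<circ> r2) = (\<lambda>n x. a * \<rho> (\<Psi> (t (r1 (r2 n))) x) + b * \<sigma> (\<Psi> (t (r1 (r2 n))) x))"
    using ft by (auto simp: o_def)
  moreover have "strict_mono (r1 \<circ> r2)" using r1 r2 strict_mono_o by blast
  ultimately show "\<exists>r g. strict_mono r \<and> L2_conv (f \<circ> r) g" by metis
qed

lemma Pc_zero: "L2_precompact (orbit \<Psi> (\<lambda>x. 0))"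
  unfolding L2_precompact_def
proof (intro allI impI)
  fix f :: "nat \<Rightarrow> real^'d \<Rightarrow> real"
  assume "\<forall>n. f n \<in> orbit \<Psi> (\<lambda>x. 0)"
  then have "\<And>n. f n = (\<lambda>x. 0)" by (auto simp: orbit_iff)
  then have "L2_conv (f \<circ> id) (\<lambda>x. 0)" unfolding L2_conv_def by (simp add: o_def)
  then show "\<exists>r g. strict_mono r \<and> L2_conv (f \<circ> r) g" using strict_mono_id by blast
qed

lemma Pc_sum:
  assumes "finite S" "\<And>k. k \<in> S \<Longrightarrow> A k \<in> sets torus" "\<And>k. k \<in> S \<Longrightarrow> L2_precompact (orbit \<Psi> (indicator (A k)))"
  shows "L2_precompact (orbit \<Psi> (\<lambda>x. \<Sum>k\<in>S. c k * indicator (A k) x))"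
  using assms
proof (induction S rule: finite_induct)
  case empty
  then show ?case using Pc_zero by simp
next
  case (insert k S)
  have m: "(\<lambda>x. \<Sum>k\<in>S. c k * indicator (A k) x) \<in> borel_measurable torus"
    using insert.prems by (intro borel_measurable_sum borel_measurable_times borel_measurable_const borel_measurable_indicator) auto
  have "L2_precompact (orbit \<Psi> (\<lambda>x. c k * indicator (A k) x + 1 * (\<Sum>k\<in>S. c k * indicator (A k) x)))"
    apply (rule Pc_lin[OF _ m])
    using insert by auto
  moreover have "(\<lambda>x. \<Sum>k\<in>insert k S. c k * indicator (A k) x) = (\<lambda>x. c k * indicator (A k) x + 1 * (\<Sum>k\<in>S. c k * indicator (A k) x))"
    by (rule ext) (simp only: sum.insert[OF insert.hyps] mult_1)
  ultimately show ?case by simp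
qed

lemma bound3:
  fixes p q P Q d :: real
  assumes "\<bar>p - q\<bar> \<le> d" "\<bar>Q - P\<bar> \<le> d"
  shows "(p - P)\<^sup>2 \<le> 6 * d\<^sup>2 + 3 * (q - Q)\<^sup>2"
proof -
  define a where "a = p - q"
  define b where "b = q - Q"
  define c where "c = Q - P"
  have pP: "p - P = a + b + c" unfolding a_def b_def c_def by simp
  have "3 * (a\<^sup>2 + b\<^sup>2 + c\<^sup>2) - (a + b + c)\<^sup>2 = (a - b)\<^sup>2 + (b - c)\<^sup>2 + (a - c)\<^sup>2"
    by (simp add: power2_eq_square algebra_simps)
  moreover have "0 \<le> (a - b)\<^sup>2 + (b - c)\<^sup>2 + (a - c)\<^sup>2" by simp
  ultimately have "(a + b + c)\<^sup>2 \<le> 3 * (a\<^sup>2 + b\<^sup>2 + c\<^sup>2)" by linarith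
  moreover have "a\<^sup>2 \<le> d\<^sup>2"
    using power_mono[of "\<bar>a\<bar>" d 2] assms(1) unfolding a_def by simp
  moreover have "c\<^sup>2 \<le> d\<^sup>2"
    using power_mono[of "\<bar>c\<bar>" d 2] assms(2) unfolding c_def by simp
  ultimately have "(a + b + c)\<^sup>2 \<le> 6 * d\<^sup>2 + 3 * b\<^sup>2" by (smt (verit))
  then show ?thesis unfolding pP b_def .
qed

lemma Pc_closed:
  fixes \<rho> :: "real^'d \<Rightarrow> real"
  assumes rm: "\<rho> \<in> borel_measurable torus"
    and approx: "\<And>e. e > 0 \<Longrightarrow> \<exists>\<sigma>. \<sigma> \<in> borel_measurable torus \<and> L2_precompact (orbit \<Psi> \<sigma>) \<and> (AE x in torus. \<bar>\<rho> x - \<sigma> x\<bar> \<le> e)"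
  shows "L2_precompact (orbit \<Psi> \<rho>)"
  unfolding L2_precompact_def
proof (intro allI impI)
  fix f :: "nat \<Rightarrow> real^'d \<Rightarrow> real"
  assume "\<forall>n. f n \<in> orbit \<Psi> \<rho>"
  then obtain t where t0: "\<And>n. 0 \<le> t n" and ft: "\<And>n. f n = (\<lambda>x. \<rho> (\<Psi> (t n) x))"
    by (rule orbit_seq) blast
  define d where "d k = inverse (real (Suc k))" for k
  have d0: "0 < d k" for k by (simp add: d_def)
  have d1: "d k \<le> 1" for k by (simp add: d_def inverse_le_1_iff)
  have "\<forall>k. \<exists>\<sigma>. \<sigma> \<in> borel_measurable torus \<and> L2_precompact (orbit \<Psi> \<sigma>) \<and> (AE x in torus. \<bar>\<rho> x - \<sigma> x\<bar> \<le> d k)"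
    using approx d0 by blast
  then obtain \<sigma> where sm: "\<And>k. \<sigma> k \<in> borel_measurable torus" and sp: "\<And>k. L2_precompact (orbit \<Psi> (\<sigma> k))"
     and sa: "\<And>k. AE x in torus. \<bar>\<rho> x - \<sigma> k x\<bar> \<le> d k" by metis
  define F where "F k n = (\<lambda>x. \<sigma> k (\<Psi> (t n) x))" for k n
  have Fm: "F k n \<in> borel_measurable torus" for k n unfolding F_def using comp_meas[OF t0 sm] .
  have Fo: "F k n \<in> orbit \<Psi> (\<sigma> k)" for k n unfolding F_def orbit_iff using t0 by blast
  interpret S: subseqs "\<lambda>k s. \<exists>g. L2_conv (\<lambda>n. F k (s n)) g"
  proof
    fix k and s :: "nat \<Rightarrow> nat" assume "strict_mono s"
    have "\<forall>n. F k (s n) \<in> orbit \<Psi> (\<sigma> k)" using Fo by blast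
    from sp[of k, unfolded L2_precompact_def, THEN spec, THEN mp, OF this]
    obtain r' g where "strict_mono r'" "L2_conv ((\<lambda>n. F k (s n)) \<circ> r') g" by blast
    then show "\<exists>r'. strict_mono r' \<and> (\<exists>g. L2_conv (\<lambda>n. F k ((s \<circ> r') n)) g)" by (auto simp: o_def)
  qed
  define r where "r = S.diagseq"
  have rmono: "strict_mono r" unfolding r_def by (rule S.subseq_diagseq)
  have "\<exists>g. L2_conv (\<lambda>n. F k (r n)) g" for k
  proof -
    have "\<exists>g. L2_conv (\<lambda>n. F k ((S.diagseq \<circ> (+) (Suc k)) n)) g"
    proof (rule S.diagseq_holds)
      fix r :: "nat \<Rightarrow> nat" and s k assume "strict_mono r" "\<exists>g. L2_conv (\<lambda>n. F k (s n)) g"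
      then show "\<exists>g. L2_conv (\<lambda>n. F k ((s \<circ> r) n)) g"
        using L2_sub[of "\<lambda>n. F k (s n)" _ r] by (auto simp: o_def)
    qed
    then obtain g where g: "L2_conv (\<lambda>n. F k (r (Suc k + n))) g" by (auto simp: r_def o_def)
    then have "L2_conv (\<lambda>n. F k (r n)) g" unfolding L2_conv_def
      using LIMSEQ_offset[of "\<lambda>n. \<integral>\<^sup>+x. ennreal ((F k (r n) x - g x)\<^sup>2) \<partial>torus" "Suc k" 0]
      by (simp add: add.commute)
    then show ?thesis by blast
  qed
  then obtain G where G: "\<And>k. L2_conv (\<lambda>n. F k (r n)) (G k)" by metis
  have Gm: "G k \<in> borel_measurable torus" for k using G unfolding L2_conv_def by blast
  have Gi: "integrable torus (\<lambda>x. (G k x)\<^sup>2)" for k using G unfolding L2_conv_def by blast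
  have pair: "AE x in torus. \<bar>G k x - G l x\<bar> \<le> d k + d l" for k l
  proof (rule L2_bound[OF _ _ G[of k] G[of l]])
    fix n
    show "F k (r n) \<in> borel_measurable torus" by (rule Fm)
    show "F l (r n) \<in> borel_measurable torus" by (rule Fm)
    have "AE y in torus. \<bar>\<sigma> k y - \<sigma> l y\<bar> \<le> d k + d l" using sa[of k] sa[of l]
      by eventually_elim auto
    then show "AE x in torus. \<bar>F k (r n) x - F l (r n) x\<bar> \<le> d k + d l"
      unfolding F_def by (rule AE_Psi[OF t0])
  qed
  have rho_ae: "AE x in torus. \<bar>f (r n) x - F k (r n) x\<bar> \<le> d k" for k n
    unfolding ft F_def by (rule AE_Psi[OF t0 sa[of k]])
  have AEall: "AE x in torus. (\<forall>k l. \<bar>G k x - G l x\<bar> \<le> d k + d l)"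
    using pair by (simp add: AE_all_countable)
  define g where "g = (\<lambda>x. lim (\<lambda>k. G k x))"
  have gm: "g \<in> borel_measurable torus" unfolding g_def by (rule borel_measurable_lim_metric) (rule Gm)
  have dlim: "d \<longlonglongrightarrow> 0" unfolding d_def by (rule LIMSEQ_inverse_real_of_nat)
  have Gg: "AE x in torus. \<forall>k. \<bar>G k x - g x\<bar> \<le> d k"
  proof (rule eventually_mono[OF AEall], intro allI)
    fix x k assume H: "\<forall>k l. \<bar>G k x - G l x\<bar> \<le> d k + d l"
    have "Cauchy (\<lambda>k. G k x)"
    proof (rule metric_CauchyI)
      fix e :: real assume "0 < e"
      then obtain N where N: "inverse (real (Suc N)) < e/2" using reals_Archimedean[of "e/2"] by auto
      have "dist (G m x) (G n x) < e" if "m \<ge> N" "n \<ge> N" for m n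
      proof -
        have "d m \<le> d N" "d n \<le> d N" using that by (auto simp: d_def intro!: le_imp_inverse_le)
        then show ?thesis using H[rule_format, of m n] N unfolding dist_real_def d_def by linarith
      qed
      then show "\<exists>M. \<forall>m\<ge>M. \<forall>n\<ge>M. dist (G m x) (G n x) < e" by blast
    qed
    then have conv: "(\<lambda>k. G k x) \<longlonglongrightarrow> g x" unfolding g_def
      using Cauchy_convergent_iff convergent_LIMSEQ_iff by blast
    have l1: "(\<lambda>l. \<bar>G k x - G l x\<bar>) \<longlonglongrightarrow> \<bar>G k x - g x\<bar>" by (intro tendsto_intros conv)
    have l2: "(\<lambda>l. d k + d l) \<longlonglongrightarrow> d k + 0" by (intro tendsto_intros dlim)
    show "\<bar>G k x - g x\<bar> \<le> d k" using LIMSEQ_le[OF l1 l2] H by auto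
  qed
  interpret finite_measure "torus :: (real^'d) measure" by (rule torus_finite)
  show "\<exists>r g. strict_mono r \<and> L2_conv (f \<circ> r) g"
  proof (intro exI conjI)
    show "strict_mono r" by (rule rmono)
    show "L2_conv (f \<circ> r) g" unfolding L2_conv_def
    proof (intro conjI)
      show "g \<in> borel_measurable torus" by (rule gm)
      show "integrable torus (\<lambda>x. (g x)\<^sup>2)"
      proof (rule Bochner_Integration.integrable_bound)
        show "integrable torus (\<lambda>x. 2 * (G 0 x)\<^sup>2 + 2)" using Gi[of 0] by auto
        show "(\<lambda>x. (g x)\<^sup>2) \<in> borel_measurable torus" using gm by measurable
        show "AE x in torus. norm ((g x)\<^sup>2) \<le> norm (2 * (G 0 x)\<^sup>2 + 2)"
        proof (rule eventually_mono[OF Gg])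
          fix x assume "\<forall>k. \<bar>G k x - g x\<bar> \<le> d k"
          then have h: "\<bar>g x - G 0 x\<bar> \<le> 1" using d1[of 0] by (metis abs_minus_commute order_trans)
          have "(g x)\<^sup>2 = (G 0 x + (g x - G 0 x))\<^sup>2" by simp
          also have "\<dots> \<le> 2 * (G 0 x)\<^sup>2 + 2 * (g x - G 0 x)\<^sup>2" by (rule sq_sum2)
          finally have a: "(g x)\<^sup>2 \<le> 2 * (G 0 x)\<^sup>2 + 2 * (g x - G 0 x)\<^sup>2" .
          have "(g x - G 0 x)\<^sup>2 \<le> 1" using power_mono[of "\<bar>g x - G 0 x\<bar>" 1 2] h by simp
          with a show "norm ((g x)\<^sup>2) \<le> norm (2 * (G 0 x)\<^sup>2 + 2)" by simp
        qed
      qed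
      show "(\<lambda>n. \<integral>\<^sup>+x. ennreal (((f \<circ> r) n x - g x)\<^sup>2) \<partial>torus) \<longlonglongrightarrow> 0"
      proof (rule eps_lemma)
        fix e :: real assume e: "e > 0"
        define \<mu> where "\<mu> = measure (torus :: (real^'d) measure) (space torus)"
        have \<mu>0: "0 \<le> \<mu>" unfolding \<mu>_def by simp
        have em\<mu>: "emeasure (torus :: (real^'d) measure) (space torus) = ennreal \<mu>" unfolding \<mu>_def by (simp add: emeasure_eq_measure)
        obtain k where k: "inverse (real (Suc k)) < e / (12 * (\<mu> + 1))"
          using reals_Archimedean[of "e / (12 * (\<mu> + 1))"] e \<mu>0 by auto
        have a1: "d k * (12 * (\<mu> + 1)) < e" using k \<mu>0 by (simp add: d_def less_divide_eq)
        have a2: "(d k)\<^sup>2 \<le> d k" using mult_right_le_one_le[of "d k" "d k"] d0[of k] d1[of k]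
          by (simp add: power2_eq_square)
        have a3: "(d k)\<^sup>2 * \<mu> \<le> d k * \<mu>" by (rule mult_right_mono[OF a2 \<mu>0])
        have a4: "d k * \<mu> \<le> d k * (\<mu> + 1)" using d0[of k] by simp
        have dk: "6 * (d k)\<^sup>2 * \<mu> \<le> e / 2"
          using a1 a3 a4 by (simp add: algebra_simps)
        have Ylim: "(\<lambda>n. \<integral>\<^sup>+x. ennreal ((F k (r n) x - G k x)\<^sup>2) \<partial>torus) \<longlonglongrightarrow> 0"
          using G[of k] unfolding L2_conv_def by blast
        have "eventually (\<lambda>n. (\<integral>\<^sup>+x. ennreal ((F k (r n) x - G k x)\<^sup>2) \<partial>torus) < ennreal (e/6)) sequentially"
          using order_tendstoD(2)[OF Ylim] e by simp
        then show "eventually (\<lambda>n. (\<integral>\<^sup>+x. ennreal (((f \<circ> r) n x - g x)\<^sup>2) \<partial>torus) \<le> ennreal e) sequentially"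
        proof (rule eventually_mono)
          fix n assume Y: "(\<integral>\<^sup>+x. ennreal ((F k (r n) x - G k x)\<^sup>2) \<partial>torus) < ennreal (e/6)"
          have "(\<integral>\<^sup>+x. ennreal (((f \<circ> r) n x - g x)\<^sup>2) \<partial>torus)
              \<le> (\<integral>\<^sup>+x. ennreal (6 * (d k)\<^sup>2 + 3 * (F k (r n) x - G k x)\<^sup>2) \<partial>torus)"
          proof (rule nn_integral_mono_AE)
            show "AE x in torus. ennreal (((f \<circ> r) n x - g x)\<^sup>2) \<le> ennreal (6 * (d k)\<^sup>2 + 3 * (F k (r n) x - G k x)\<^sup>2)"
              using rho_ae[of n k] Gg
            proof eventually_elim
              case (elim x)
              then have h1: "\<bar>f (r n) x - F k (r n) x\<bar> \<le> d k" and h2: "\<bar>G k x - g x\<bar> \<le> d k" by auto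
              show ?case unfolding o_def by (rule ennreal_leI) (rule bound3[OF h1 h2])
            qed
          qed
          also have "\<dots> = (\<integral>\<^sup>+x. ennreal (6 * (d k)\<^sup>2) + ennreal 3 * ennreal ((F k (r n) x - G k x)\<^sup>2) \<partial>torus)"
            by (intro nn_integral_cong) (simp add: ennreal_plus ennreal_mult)
          also have "\<dots> = (\<integral>\<^sup>+x. ennreal (6 * (d k)\<^sup>2) \<partial>(torus :: (real^'d) measure)) + (\<integral>\<^sup>+x. ennreal 3 * ennreal ((F k (r n) x - G k x)\<^sup>2) \<partial>torus)"
            by (rule nn_integral_add) (use Fm Gm in measurable)
          also have "\<dots> = ennreal (6 * (d k)\<^sup>2) * ennreal \<mu> + ennreal 3 * (\<integral>\<^sup>+x. ennreal ((F k (r n) x - G k x)\<^sup>2) \<partial>torus)"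
            using Fm Gm em\<mu> by (simp add: nn_integral_cmult)
          also have "\<dots> \<le> ennreal (e/2) + ennreal 3 * ennreal (e/6)"
          proof (rule add_mono)
            have "ennreal (6 * (d k)\<^sup>2) * ennreal \<mu> = ennreal (6 * (d k)\<^sup>2 * \<mu>)"
              using \<mu>0 by (simp add: ennreal_mult)
            also have "\<dots> \<le> ennreal (e/2)" using dk by (rule ennreal_leI)
            finally show "ennreal (6 * (d k)\<^sup>2) * ennreal \<mu> \<le> ennreal (e/2)" .
            show "ennreal 3 * (\<integral>\<^sup>+x. ennreal ((F k (r n) x - G k x)\<^sup>2) \<partial>torus) \<le> ennreal 3 * ennreal (e/6)"
              using Y by (intro mult_left_mono) auto
          qed
          also have "\<dots> = ennreal e"
          proof -
            have "ennreal 3 * ennreal (e/6) = ennreal (3 * (e/6))" using e by (intro ennreal_mult[symmetric]) auto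
            also have "\<dots> = ennreal (e/2)" by simp
            finally have "ennreal 3 * ennreal (e/6) = ennreal (e/2)" .
            moreover have "ennreal (e/2) + ennreal (e/2) = ennreal e" using e by (simp add: ennreal_plus[symmetric])
            ultimately show ?thesis by simp
          qed
          finally show "(\<integral>\<^sup>+x. ennreal (((f \<circ> r) n x - g x)\<^sup>2) \<partial>torus) \<le> ennreal e" .
        qed
      qed
    qed
  qed
qed

lemma Pc_all:
  fixes \<rho> :: "real^'d \<Rightarrow> real"
  assumes ind: "\<And>D. D \<in> sets torus \<Longrightarrow> L2_precompact (orbit \<Psi> (indicator D))" and rho: "in_Linf \<rho>"
  shows "L2_precompact (orbit \<Psi> \<rho>)"
proof -
  from rho obtain M where rm: "\<rho> \<in> borel_measurable torus" and M: "AE x in torus. \<bar>\<rho> x\<bar> \<le> M"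
    by (auto simp: in_Linf_iff)
  show ?thesis
  proof (rule Pc_closed[OF rm])
    fix e :: real assume e: "e > 0"
    define N where "N = \<lceil>max M 0 / e\<rceil>"
    define A where "A k = {x \<in> space torus. \<lfloor>\<rho> x / e\<rfloor> = k}" for k :: int
    have A: "A k \<in> sets torus" for k unfolding A_def using rm by measurable
    define \<sigma> where "\<sigma> = (\<lambda>x. \<Sum>k\<in>{-N..N}. (real_of_int k * e) * indicator (A k) x)"
    have sm: "\<sigma> \<in> borel_measurable torus" unfolding \<sigma>_def
      using A by (intro borel_measurable_sum borel_measurable_times borel_measurable_const borel_measurable_indicator) auto
    have sp: "L2_precompact (orbit \<Psi> \<sigma>)" unfolding \<sigma>_def
      by (rule Pc_sum) (auto intro: A ind)
    have "AE x in torus. \<bar>\<rho> x - \<sigma> x\<bar> \<le> e"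
      using M AE_space
    proof eventually_elim
      case (elim x)
      then have x: "x \<in> space torus" and xM: "\<bar>\<rho> x\<bar> \<le> M" by auto
      define k0 where "k0 = \<lfloor>\<rho> x / e\<rfloor>"
      have b1: "\<rho> x / e \<le> max M 0 / e" using xM e by (intro divide_right_mono) auto
      have "- max M 0 \<le> \<rho> x" using xM by (auto split: abs_split)
      then have "- max M 0 / e \<le> \<rho> x / e" using e by (intro divide_right_mono) auto
      then have b2: "- (max M 0 / e) \<le> \<rho> x / e" by simp
      have "k0 \<le> N" unfolding k0_def N_def
        using b1 by (meson floor_le_ceiling floor_mono order_trans)
      moreover have "- N \<le> k0" unfolding k0_def N_def
      proof -
        have "real_of_int (- \<lceil>max M 0 / e\<rceil>) \<le> - (max M 0 / e)" by simp
        then show "- \<lceil>max M 0 / e\<rceil> \<le> \<lfloor>\<rho> x / e\<rfloor>" using b2 by (subst le_floor_iff) linarith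
      qed
      ultimately have k0r: "k0 \<in> {-N..N}" by simp
      have "\<sigma> x = (\<Sum>k\<in>{-N..N}. if k = k0 then real_of_int k * e else 0)"
        unfolding \<sigma>_def A_def k0_def using x by (intro sum.cong) (auto simp: indicator_def)
      also have "\<dots> = real_of_int k0 * e" using k0r by simp
      finally have sx: "\<sigma> x = real_of_int k0 * e" .
      have f1: "real_of_int k0 \<le> \<rho> x / e" unfolding k0_def by simp
      have f2: "\<rho> x / e < real_of_int k0 + 1" unfolding k0_def by simp
      have "real_of_int k0 * e \<le> \<rho> x" using f1 e by (simp add: le_divide_eq)
      moreover have "\<rho> x < (real_of_int k0 + 1) * e" using f2 e by (simp add: divide_less_eq)
      ultimately show ?case unfolding sx by (simp add: algebra_simps)
    qed
    then show "\<exists>\<sigma>. \<sigma> \<in> borel_measurable torus \<and> L2_precompact (orbit \<Psi> \<sigma>) \<and> (AE x in torus. \<bar>\<rho> x - \<sigma> x\<bar> \<le> e)"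
      using sm sp by blast
  qed
qed

end

theorem corollary4p5:
  fixes u :: "real \<Rightarrow> real^'d::finite \<Rightarrow> real^'d"
    and X \<Psi> :: "real \<Rightarrow> real^'d \<Rightarrow> real^'d"
    and p :: real
  assumes "CARD('d) \<ge> 2"
    and "1 < p"
    and "Linf_W1p p u"
    and "div_free u"
    and "DL_flow u X \<Psi>"
  shows "(Linf_open (mixed_set \<Psi>) \<and> Linf_dense (mixed_set \<Psi>))
           \<longleftrightarrow> nonmixed_sets \<Psi> \<noteq> sets torus"
proof -
  have "\<And>t. 0 \<le> t \<Longrightarrow> meas_pres (\<Psi> t)" using assms(5) unfolding DL_flow_def by blast
  then interpret mpf \<Psi> by unfold_locales
  have zero: "in_Linf (\<lambda>x::real^'d. 0)" unfolding in_Linf_iff by auto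
  show ?thesis
  proof
    assume od: "Linf_open (mixed_set \<Psi>) \<and> Linf_dense (mixed_set \<Psi>)"
    show "nonmixed_sets \<Psi> \<noteq> sets torus"
    proof
      assume eq: "nonmixed_sets \<Psi> = sets torus"
      have ind: "\<And>D. D \<in> sets torus \<Longrightarrow> L2_precompact (orbit \<Psi> (indicator D))"
        using eq unfolding nonmixed_sets_def by blast
      obtain \<sigma> where "\<sigma> \<in> mixed_set \<Psi>"
        using od zero unfolding Linf_dense_def by (meson zero_less_one)
      then have "in_Linf \<sigma>" "\<not> L2_precompact (orbit \<Psi> \<sigma>)" unfolding mixed_set_def by auto
      then show False using Pc_all[OF ind] by blast
    qed
  next
    assume "nonmixed_sets \<Psi> \<noteq> sets torus"
    then obtain D where D: "D \<in> sets torus" and nD: "\<not> L2_precompact (orbit \<Psi> (indicator D))"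
      unfolding nonmixed_sets_def by blast
    have Dm: "(indicator D :: real^'d \<Rightarrow> real) \<in> borel_measurable torus" using D by simp
    have sub: "mixed_set \<Psi> \<subseteq> {f. in_Linf f}" unfolding mixed_set_def by auto
    show "Linf_open (mixed_set \<Psi>) \<and> Linf_dense (mixed_set \<Psi>)"
    proof
      show "Linf_open (mixed_set \<Psi>)" unfolding Linf_open_def
      proof (intro conjI sub ballI)
        fix \<rho> assume r: "\<rho> \<in> mixed_set \<Psi>"
        then have rL: "in_Linf \<rho>" and rn: "\<not> L2_precompact (orbit \<Psi> \<rho>)" unfolding mixed_set_def by auto
        show "\<exists>\<epsilon>>0. \<forall>\<sigma>. in_Linf \<sigma> \<and> Linf_dist \<sigma> \<rho> < ereal \<epsilon> \<longrightarrow> \<sigma> \<in> mixed_set \<Psi>"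
        proof (rule ccontr)
          assume H: "\<not> (\<exists>\<epsilon>>0. \<forall>\<sigma>. in_Linf \<sigma> \<and> Linf_dist \<sigma> \<rho> < ereal \<epsilon> \<longrightarrow> \<sigma> \<in> mixed_set \<Psi>)"
          have "L2_precompact (orbit \<Psi> \<rho>)"
          proof (rule Pc_closed)
            show "\<rho> \<in> borel_measurable torus" using rL unfolding in_Linf_def by blast
            fix e :: real assume "e > 0"
            then obtain \<sigma> where s: "in_Linf \<sigma>" "Linf_dist \<sigma> \<rho> < ereal e" "\<sigma> \<notin> mixed_set \<Psi>"
              using H by blast
            then have "L2_precompact (orbit \<Psi> \<sigma>)" unfolding mixed_set_def by blast
            moreover have "\<sigma> \<in> borel_measurable torus" using s unfolding in_Linf_def by blast
            moreover have "AE x in torus. \<bar>\<rho> x - \<sigma> x\<bar> \<le> e"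
              using Linf_dist_lt[OF s(2)] by (auto elim!: eventually_mono simp: abs_minus_commute)
            ultimately show "\<exists>\<sigma>. \<sigma> \<in> borel_measurable torus \<and> L2_precompact (orbit \<Psi> \<sigma>) \<and> (AE x in torus. \<bar>\<rho> x - \<sigma> x\<bar> \<le> e)"
              by blast
          qed
          then show False using rn by blast
        qed
      qed
      show "Linf_dense (mixed_set \<Psi>)" unfolding Linf_dense_def
      proof (intro conjI sub allI impI)
        fix \<rho> :: "real^'d \<Rightarrow> real" and \<epsilon> :: real
        assume rL: "in_Linf \<rho>" and e: "0 < \<epsilon>"
        from rL obtain M where rm: "\<rho> \<in> borel_measurable torus" and M: "AE x in torus. \<bar>\<rho> x\<bar> \<le> M"
          by (auto simp: in_Linf_iff)
        show "\<exists>\<sigma>\<in>mixed_set \<Psi>. Linf_dist \<sigma> \<rho> < ereal \<epsilon>"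
        proof (cases "L2_precompact (orbit \<Psi> \<rho>)")
          case False
          then have "\<rho> \<in> mixed_set \<Psi>" using rL unfolding mixed_set_def by auto
          moreover have "Linf_dist \<rho> \<rho> \<le> ereal 0" by (rule Linf_dist_le[OF rm rm]) simp
          moreover have "ereal 0 < ereal \<epsilon>" using e by simp
          ultimately show ?thesis using le_less_trans by blast
        next
          case True
          define \<sigma> where "\<sigma> = (\<lambda>x. 1 * \<rho> x + (\<epsilon>/2) * indicator D x)"
          have sm: "\<sigma> \<in> borel_measurable torus" unfolding \<sigma>_def using rm Dm by measurable
          have "AE x in torus. \<bar>\<sigma> x\<bar> \<le> M + \<epsilon>/2"
            using M by (rule eventually_mono) (use e in \<open>auto simp: \<sigma>_def indicator_def abs_if split: if_splits\<close>)
          then have sL: "in_Linf \<sigma>" using sm unfolding in_Linf_iff by blast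
          have "\<not> L2_precompact (orbit \<Psi> \<sigma>)"
          proof
            assume sP: "L2_precompact (orbit \<Psi> \<sigma>)"
            have "L2_precompact (orbit \<Psi> (\<lambda>x. (2/\<epsilon>) * \<sigma> x + (-(2/\<epsilon>)) * \<rho> x))"
              by (rule Pc_lin[OF sm rm sP True])
            moreover have "(\<lambda>x. (2/\<epsilon>) * \<sigma> x + (-(2/\<epsilon>)) * \<rho> x) = indicator D"
              using e by (auto simp: \<sigma>_def algebra_simps)
            ultimately show False using nD by simp
          qed
          then have "\<sigma> \<in> mixed_set \<Psi>" using sL unfolding mixed_set_def by auto
          moreover have "Linf_dist \<sigma> \<rho> \<le> ereal (\<epsilon>/2)"
            by (rule Linf_dist_le[OF sm rm]) (use e in \<open>auto simp: \<sigma>_def indicator_def\<close>)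
          moreover have "ereal (\<epsilon>/2) < ereal \<epsilon>" using e by simp
          ultimately show ?thesis using le_less_trans by blast
        qed
      qed
    qed
  qed
qed

end
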